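(* Let $q_i=(\mathbf A_i,\mathbf b_i)\in Q$, $i=1,2,3$, be the vertices of a non-degenerate horizontal (open) 3-gon, i.e., the lines $q_1q_2$ and $q_2q_3$ are horizontal and $q_1,q_2,q_3$ are non-collinear. Then the projected pair of inscribed 3-gons with vertices $A_i=[\mathbf A_i]$ and edges $b_i=[\mathbf b_i]$ satisfies $$[A_2,B_1,A_1,D]+[B_2,A_2,C,A_3]=0,$$ where $B_1=b_1\cap b_2$, $B_2=b_2\cap b_3$, $C=b_1\cap a_2$, $D=a_1\cap b_2$, $a_i$ the line $A_iA_{i+1}$. Conversely, every non-degenerate inscribed pair of 3-gons satisfying this equation lifts uniquely to a horizontal 3-gon in $Q$.
   Context: $Q:=\{(\mathbf A,\mathbf b)\in\mathbb R^3\times(\mathbb R^3)^*:\mathbf b\mathbf A=1\}$ ($\mathbf A$ column, $\mathbf b$ row). For $\mathbf A,\mathbf A'\in\mathbb R^3$, $\mathbf A\times\mathbf A':=\det(\mathbf A,\mathbf A',\cdot)\in(\mathbb R^3)^*$. The distribution $\mathscr D$ at $(\mathbf A,\mathbf b)$: vectors with $\dot{\mathbf b}\mathbf A+\mathbf b\dot{\mathbf A}=0$, $\dot{\mathbf b}=\mathbf A\times\dot{\mathbf A}$. A line is horizontal if it is an affine line in $Q$ everywhere tangent to $\mathscr D$. $[\mathbf A]$ is the point of $\mathbb{RP}^2$ with homogeneous coordinates $\mathbf A$, $[\mathbf b]$ the line $\{X:\mathbf bX=0\}$. The pair of 3-gons (points $A_1,A_2,A_3$, lines $b_1,b_2,b_3$)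 is inscribed if $b_i\cap b_{i+1}\in A_iA_{i+1}$ for $i=1,2$; non-degenerate if $A_i\notin b_i$, $A_1,A_2,A_3$ are non-collinear and $b_1,b_2,b_3$ are non-concurrent. Cross-ratio of collinear points: $[P_1,P_2,P_3,P_4]=\frac{(x_1-x_3)(x_2-x_4)}{(x_1-x_4)(x_2-x_3)}$ in an affine coordinate on the line. Lifting means finding points of $Q$ over the given points and lines. *)

theory Defs
  imports "HOL-Analysis.Analysis"
begin

text \<open>A column vector A and a row covector b of R^3 are both
  modelled as elements of real^3; the pairing b A is the inner product b \<bullet> A, and
  det(A, A', .) is identified with the covector cross3 A A' (since det(A,A',X) = (A x A') . X).\<close>

definition inQ :: "real^3 \<Rightarrow> real^3 \<Rightarrow> bool" where
  "inQ A b \<longleftrightarrow> b \<bullet> A = 1"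

definition in_distrib :: "real^3 \<Rightarrow> real^3 \<Rightarrow> real^3 \<Rightarrow> real^3 \<Rightarrow> bool" where
  "in_distrib A b dA db \<longleftrightarrow> db \<bullet> A + b \<bullet> dA = 0 \<and> db = cross3 A dA"

definition horizontal_line :: "((real^3) \<times> (real^3)) \<Rightarrow> ((real^3) \<times> (real^3)) \<Rightarrow> bool" where
  "horizontal_line q q' \<longleftrightarrow> q \<noteq> q' \<and>
     (\<forall>t::real. inQ (fst (q + t *\<^sub>R (q' - q))) (snd (q + t *\<^sub>R (q' - q))) \<and>
        in_distrib (fst (q + t *\<^sub>R (q' - q))) (snd (q + t *\<^sub>R (q' - q)))
                   (fst (q' - q)) (snd (q' - q)))"

definition on_line :: "real^3 \<Rightarrow> real^3 \<Rightarrow> bool" where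
  "on_line X l \<longleftrightarrow> l \<bullet> X = 0"

definition meet :: "real^3 \<Rightarrow> real^3 \<Rightarrow> real^3" where
  "meet l m = cross3 l m"

definition join :: "real^3 \<Rightarrow> real^3 \<Rightarrow> real^3" where
  "join P P' = cross3 P P'"

text \<open>For p_i = s_i u + t_i v in a basis u, v of the plane of the line one has
  p_i x p_j = (s_i t_j - s_j t_i) (u x v), so this equals
  (x1-x3)(x2-x4)/((x1-x4)(x2-x3)) for the affine coordinate x_i = s_i/t_i.\<close>
definition cross_ratio :: "real^3 \<Rightarrow> real^3 \<Rightarrow> real^3 \<Rightarrow> real^3 \<Rightarrow> real" where
  "cross_ratio p1 p2 p3 p4 =
     ((cross3 p1 p3) \<bullet> (cross3 p2 p4)) / ((cross3 p1 p4) \<bullet> (cross3 p2 p3))"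

definition inscribed :: "real^3 \<Rightarrow> real^3 \<Rightarrow> real^3 \<Rightarrow> real^3 \<Rightarrow> real^3 \<Rightarrow> real^3 \<Rightarrow> bool" where
  "inscribed P1 P2 P3 l1 l2 l3 \<longleftrightarrow>
     on_line (meet l1 l2) (join P1 P2) \<and> on_line (meet l2 l3) (join P2 P3)"

definition nondegenerate :: "real^3 \<Rightarrow> real^3 \<Rightarrow> real^3 \<Rightarrow> real^3 \<Rightarrow> real^3 \<Rightarrow> real^3 \<Rightarrow> bool" where
  "nondegenerate P1 P2 P3 l1 l2 l3 \<longleftrightarrow>
     \<not> on_line P1 l1 \<and> \<not> on_line P2 l2 \<and> \<not> on_line P3 l3 \<and>
     det (vector [P1, P2, P3]) \<noteq> 0 \<and>
     det (vector [l1, l2, l3]) \<noteq> 0"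

text \<open>The cross-ratio equation [A2,B1,A1,D] + [B2,A2,C,A3] = 0 with
  B1 = b1 meet b2, B2 = b2 meet b3, a1 = A1A2, a2 = A2A3, C = b1 meet a2, D = a1 meet b3.\<close>
definition cr_equation :: "real^3 \<Rightarrow> real^3 \<Rightarrow> real^3 \<Rightarrow> real^3 \<Rightarrow> real^3 \<Rightarrow> real^3 \<Rightarrow> bool" where
  "cr_equation P1 P2 P3 l1 l2 l3 \<longleftrightarrow>
     cross_ratio P2 (meet l1 l2) P1 (meet (join P1 P2) l3)
   + cross_ratio (meet l2 l3) P2 (meet l1 (join P2 P3)) P3 = 0"

definition lies_over :: "real^3 \<Rightarrow> real^3 \<Rightarrow> real^3 \<Rightarrow> real^3 \<Rightarrow> bool" where
  "lies_over A b P l \<longleftrightarrow> inQ A b \<and> (\<exists>c. c \<noteq> 0 \<and> A = c *\<^sub>R P) \<and> (\<exists>c. c \<noteq> 0 \<and> b = c *\<^sub>R l)"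

end

theory Submission
  imports Defs
begin

lemma cc_dot: "(cross3 a b) \<bullet> (cross3 c d) = (a \<bullet> c) * (b \<bullet> d) - (a \<bullet> d) * (b \<bullet> c)"
  by (simp add: cross3_simps)
lemma cc_cross: "cross3 (cross3 a b) c = (a \<bullet> c) *\<^sub>R b - (b \<bullet> c) *\<^sub>R a"
  unfolding vec_eq_iff forall_3 by (simp add: cross3_def inner_vec_def sum_3 algebra_simps)
lemma det3_triple: "det (vector [a,b,c]) = a \<bullet> cross3 b c"
  by (simp add: dot_cross_det)
lemma triple_cyc: "(cross3 a b) \<bullet> c = a \<bullet> cross3 b c"
  by (simp add: cross3_simps)
lemma triple_cyc2: "a \<bullet> cross3 b c = b \<bullet> cross3 c a"
  by (simp add: cross3_simps)
lemma cramer: "(a \<bullet> cross3 b c) *\<^sub>R v = (v \<bullet> cross3 b c) *\<^sub>R a + (a \<bullet> cross3 v c) *\<^sub>R b + (a \<bullet> cross3 b v) *\<^sub>R c"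
  unfolding vec_eq_iff forall_3 by (simp add: cross3_def inner_vec_def sum_3 algebra_simps)
lemma dual_cramer: "(a \<bullet> cross3 b c) *\<^sub>R v = (v \<bullet> a) *\<^sub>R cross3 b c + (v \<bullet> b) *\<^sub>R cross3 c a + (v \<bullet> c) *\<^sub>R cross3 a b"
  unfolding vec_eq_iff forall_3 by (simp add: cross3_def inner_vec_def sum_3 algebra_simps)
lemma horiz_iff: "horizontal_line (A,b) (A',b') \<longleftrightarrow>
   (A,b) \<noteq> (A',b') \<and> b \<bullet> A = 1 \<and> b \<bullet> A' = 1 \<and> b' = b + cross3 A A'"
proof
  assume h: "horizontal_line (A,b) (A',b')"
  then have ne: "(A,b) \<noteq> (A',b')" and h0: "inQ A b \<and> in_distrib A b (A'-A) (b'-b)"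
    unfolding horizontal_line_def by (auto dest: spec[of _ 0])
  from h0 have e1: "b' - b = cross3 A A'" and e2: "(b'-b) \<bullet> A + b \<bullet> (A'-A) = 0" and e3: "b \<bullet> A = 1"
    by (auto simp: in_distrib_def inQ_def Cross3.right_diff_distrib)
  from e1 e2 have "b \<bullet> A' = b \<bullet> A" by (simp add: dot_cross_self inner_diff_right)
  with e1 e3 ne show "(A,b) \<noteq> (A',b') \<and> b \<bullet> A = 1 \<and> b \<bullet> A' = 1 \<and> b' = b + cross3 A A'"
    by (auto simp: algebra_simps)
next
  assume h: "(A,b) \<noteq> (A',b') \<and> b \<bullet> A = 1 \<and> b \<bullet> A' = 1 \<and> b' = b + cross3 A A'"
  then have e: "b' - b = cross3 A A'" by simp
  have c1: "cross3 (A + t *\<^sub>R (A' - A)) (A' - A) = cross3 A A'" for t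
    by (simp add: cross_add_left cross_mult_left Cross3.right_diff_distrib Cross3.left_diff_distrib cross_skew[of A' A])
  show "horizontal_line (A,b) (A',b')"
    unfolding horizontal_line_def inQ_def in_distrib_def
    using h e c1
    apply (simp add: inner_add_left inner_add_right inner_diff_left inner_diff_right dot_cross_self algebra_simps)
    by auto
qed
lemma c_cc: "cross3 a (cross3 b c) = (a \<bullet> c) *\<^sub>R b - (a \<bullet> b) *\<^sub>R c"
  unfolding vec_eq_iff forall_3 by (simp add: cross3_def inner_vec_def sum_3 algebra_simps)

lemma terms:
  fixes A1 A2 A3 b1 b2 b3 :: "real^3"
  defines "N \<equiv> cross3 A1 A2" and "M \<equiv> cross3 A2 A3" and "d \<equiv> A1 \<bullet> cross3 A2 A3"
  assumes h11: "b1 \<bullet> A1 = 1" and h12: "b1 \<bullet> A2 = 1" and hb2: "b2 = b1 + N" and h23: "b2 \<bullet> A3 = 1"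
    and h32: "b3 \<bullet> A2 = 1" and h33: "b3 \<bullet> A3 = 1" and hb3: "b3 = b2 + k *\<^sub>R M"
  shows "cross_ratio A2 (meet b1 b2) A1 (meet (join A1 A2) b3) = (1 - b3 \<bullet> A1) * (N \<bullet> N) / (N \<bullet> N)"
    and "cross_ratio (meet b2 b3) A2 (meet b1 (join A2 A3)) A3 = d * (k * (M \<bullet> M)) / (k * (M \<bullet> M))"
proof -
  define s where "s = b3 \<bullet> A1"
  have NA1: "N \<bullet> A1 = 0" "N \<bullet> A2 = 0" "A1 \<bullet> N = 0" "A2 \<bullet> N = 0" unfolding N_def by (simp_all add: dot_cross_self inner_commute)
  have MA: "M \<bullet> A2 = 0" "M \<bullet> A3 = 0" "A2 \<bullet> M = 0" "A3 \<bullet> M = 0" unfolding M_def by (simp_all add: dot_cross_self inner_commute)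
  have NA3: "N \<bullet> A3 = d" unfolding N_def d_def by (simp add: triple_cyc)
  have b21: "b2 \<bullet> A1 = 1" and b22: "b2 \<bullet> A2 = 1" using hb2 h11 h12 NA1 by (simp_all add: inner_add_left)
  have b13: "b1 \<bullet> A3 = 1 - d" using hb2 h23 NA3 by (simp add: inner_add_left)
  define D where "D = meet (join A1 A2) b3"
  have D: "D = s *\<^sub>R A2 - A1" unfolding D_def meet_def join_def s_def
    using h32 by (simp add: cc_cross inner_commute)
  have b1D: "b1 \<bullet> D = s - 1" and b2D: "b2 \<bullet> D = s - 1" using D h11 h12 b21 b22 by (simp_all add: inner_diff_right)
  have B1D: "cross3 (cross3 b1 b2) D = (s - 1) *\<^sub>R N"
  proof -
    have "cross3 (cross3 b1 b2) D = (s - 1) *\<^sub>R (b2 - b1)"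
      by (simp add: cc_cross b1D b2D algebra_simps)
    then show ?thesis using hb2 by simp
  qed
  have A2D: "cross3 A2 D = N" unfolding D N_def
    by (simp add: Cross3.right_diff_distrib cross_mult_right cross_skew[of A2 A1])
  have B1A1: "cross3 (cross3 b1 b2) A1 = N" 
  proof -
    have "cross3 (cross3 b1 b2) A1 = b2 - b1" by (simp add: cc_cross h11 b21)
    then show ?thesis using hb2 by simp
  qed
  have A2A1: "cross3 A2 A1 = - N" unfolding N_def by (simp add: cross_skew[of A2 A1])
  show "cross_ratio A2 (meet b1 b2) A1 (meet (join A1 A2) b3) = (1 - b3 \<bullet> A1) * (N \<bullet> N) / (N \<bullet> N)"
  proof -
    have "cross_ratio A2 (meet b1 b2) A1 (meet (join A1 A2) b3) = ((- N) \<bullet> ((s - 1) *\<^sub>R N)) / (N \<bullet> N)"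
      unfolding cross_ratio_def D_def[symmetric] meet_def[of b1 b2] B1D A2D B1A1 A2A1 by simp
    then show ?thesis unfolding s_def by (simp add: algebra_simps)
  qed
  define C where "C = meet b1 (join A2 A3)"
  have C: "C = (1 - d) *\<^sub>R A2 - A3" unfolding C_def meet_def join_def by (simp add: c_cc b13 h12)
  have b2C: "b2 \<bullet> C = - d" and b3C: "b3 \<bullet> C = - d" unfolding C using b22 h23 h32 h33 by (simp_all add: inner_diff_right algebra_simps)
  have B2C: "cross3 (cross3 b2 b3) C = (- d * k) *\<^sub>R M" 
  proof -
    have "cross3 (cross3 b2 b3) C = (- d) *\<^sub>R (b3 - b2)"
      by (simp add: cc_cross b2C b3C algebra_simps)
    then show ?thesis using hb3 by simp
  qed
  have B2A3: "cross3 (cross3 b2 b3) A3 = k *\<^sub>R M" 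
  proof -
    have "cross3 (cross3 b2 b3) A3 = b3 - b2" by (simp add: cc_cross h23 h33)
    then show ?thesis using hb3 by simp
  qed
  have A2C: "cross3 A2 C = - M" unfolding C M_def
    by (simp add: Cross3.right_diff_distrib cross_mult_right)
  show "cross_ratio (meet b2 b3) A2 (meet b1 (join A2 A3)) A3 = d * (k * (M \<bullet> M)) / (k * (M \<bullet> M))"
  proof -
    have "cross_ratio (meet b2 b3) A2 (meet b1 (join A2 A3)) A3 = (((- d * k) *\<^sub>R M) \<bullet> M) / ((k *\<^sub>R M) \<bullet> (- M))"
      unfolding cross_ratio_def C_def[symmetric] meet_def[of b2 b3] B2C B2A3 A2C M_def[symmetric] by simp
    then show ?thesis by (simp add: algebra_simps)
  qed
qed
lemma forward:
  fixes A1 b1 A2 b2 A3 b3 :: "real^3"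
  assumes "inQ A1 b1" "inQ A2 b2" "inQ A3 b3"
    "horizontal_line (A1, b1) (A2, b2)" "horizontal_line (A2, b2) (A3, b3)"
  shows "inscribed A1 A2 A3 b1 b2 b3 \<and> cr_equation A1 A2 A3 b1 b2 b3"
proof -
  define N where "N = cross3 A1 A2"
  define M where "M = cross3 A2 A3"
  define d where "d = A1 \<bullet> cross3 A2 A3"
  have h11: "b1 \<bullet> A1 = 1" and h12: "b1 \<bullet> A2 = 1" and hb2: "b2 = b1 + N"
    and h22: "b2 \<bullet> A2 = 1" and h23: "b2 \<bullet> A3 = 1" and hb3: "b3 = b2 + M" and h33: "b3 \<bullet> A3 = 1"
    using assms unfolding horiz_iff N_def M_def inQ_def by auto
  have h32: "b3 \<bullet> A2 = 1" using hb3 h22 unfolding M_def by (simp add: inner_add_left dot_cross_self)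
  have h21: "b2 \<bullet> A1 = 1" using hb2 h11 unfolding N_def by (simp add: inner_add_left dot_cross_self)
  have ins: "inscribed A1 A2 A3 b1 b2 b3"
    unfolding inscribed_def on_line_def meet_def join_def cc_dot
    using h11 h12 h21 h22 h23 h32 h33 by (simp add: inner_commute)
  have hb3': "b3 = b2 + 1 *\<^sub>R M" using hb3 by simp
  note T = terms[OF h11 h12 hb2[unfolded N_def] h23 h32 h33 hb3'[unfolded M_def]]
  have s: "b3 \<bullet> A1 = 1 + d" using hb3 hb2 h11 unfolding M_def N_def d_def
    by (simp add: inner_add_left dot_cross_self inner_commute[of "cross3 A2 A3" A1])
  have NA3: "N \<bullet> A3 = d" unfolding N_def d_def by (simp add: triple_cyc)
  have MA1: "A1 \<bullet> M = d" unfolding M_def d_def by simp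
  have "(- d) * (N \<bullet> N) / (N \<bullet> N) + d * (M \<bullet> M) / (M \<bullet> M) = 0"
  proof (cases "N = 0 \<or> M = 0")
    case True
    then have "d = 0" using NA3 MA1 by auto
    then show ?thesis by simp
  next
    case False
    then show ?thesis by simp
  qed
  moreover have T1: "cross_ratio A2 (meet b1 b2) A1 (meet (join A1 A2) b3) = (1 - (1+d)) * (N \<bullet> N)/(N \<bullet> N)"
    using T(1) s unfolding N_def by simp
  moreover have T2: "cross_ratio (meet b2 b3) A2 (meet b1 (join A2 A3)) A3 = d * (M \<bullet> M)/(M \<bullet> M)"
    using T(2) unfolding M_def d_def by simp
  ultimately have cr: "cr_equation A1 A2 A3 b1 b2 b3"
    unfolding cr_equation_def by simp
  show ?thesis using ins cr by simp
qed
lemma cr_scale: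
  assumes "a \<noteq> 0" "b \<noteq> 0" "c \<noteq> 0" "d \<noteq> 0"
  shows "cross_ratio (a *\<^sub>R p1) (b *\<^sub>R p2) (c *\<^sub>R p3) (d *\<^sub>R p4) = cross_ratio p1 p2 p3 p4"
proof -
  have "cross_ratio (a *\<^sub>R p1) (b *\<^sub>R p2) (c *\<^sub>R p3) (d *\<^sub>R p4) =
     ((a*b*c*d) * ((cross3 p1 p3) \<bullet> (cross3 p2 p4))) / ((a*b*c*d) * ((cross3 p1 p4) \<bullet> (cross3 p2 p3)))"
    unfolding cross_ratio_def by (simp add: cross_mult_left cross_mult_right algebra_simps)
  also have "\<dots> = cross_ratio p1 p2 p3 p4" unfolding cross_ratio_def using assms by simp
  finally show ?thesis .
qed

lemma meet_scale: "meet (a *\<^sub>R x) (b *\<^sub>R y) = (a*b) *\<^sub>R meet x y"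
  unfolding meet_def by (simp add: cross_mult_left cross_mult_right)
lemma join_scale: "join (a *\<^sub>R x) (b *\<^sub>R y) = (a*b) *\<^sub>R join x y"
  unfolding join_def by (simp add: cross_mult_left cross_mult_right)

lemma cr_eq_scale:
  assumes "a1 \<noteq> 0" "a2 \<noteq> 0" "a3 \<noteq> 0" "e1 \<noteq> 0" "e2 \<noteq> 0" "e3 \<noteq> 0"
  shows "cr_equation (a1 *\<^sub>R P1) (a2 *\<^sub>R P2) (a3 *\<^sub>R P3) (e1 *\<^sub>R l1) (e2 *\<^sub>R l2) (e3 *\<^sub>R l3)
       = cr_equation P1 P2 P3 l1 l2 l3"
  unfolding cr_equation_def meet_scale join_scale
  using assms by (simp add: cr_scale)

lemma inscribed_scale:
  assumes "a1 \<noteq> 0" "a2 \<noteq> 0" "a3 \<noteq> 0" "e1 \<noteq> 0" "e2 \<noteq> 0" "e3 \<noteq> 0"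
  shows "inscribed (a1 *\<^sub>R P1) (a2 *\<^sub>R P2) (a3 *\<^sub>R P3) (e1 *\<^sub>R l1) (e2 *\<^sub>R l2) (e3 *\<^sub>R l3)
       = inscribed P1 P2 P3 l1 l2 l3"
  unfolding inscribed_def on_line_def meet_scale join_scale
  using assms by simp

lemma same_scale: "A = c *\<^sub>R P \<Longrightarrow> A' = c' *\<^sub>R P \<Longrightarrow> b \<bullet> A = 1 \<Longrightarrow> b \<bullet> A' = 1 \<Longrightarrow> A = A'"
proof -
  assume h: "A = c *\<^sub>R P" "A' = c' *\<^sub>R P" "b \<bullet> A = 1" "b \<bullet> A' = 1"
  then have "c * (b \<bullet> P) = 1" "c' * (b \<bullet> P) = 1" by auto
  then have "c = c'" by (metis mult_cancel_right mult_zero_left zero_neq_one)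
  then show "A = A'" using h by simp
qed
definition Phi where "Phi P1 P2 P3 l1 l2 l3 A1 b1 A2 b2 A3 b3 \<longleftrightarrow>
   lies_over A1 b1 P1 l1 \<and> lies_over A2 b2 P2 l2 \<and> lies_over A3 b3 P3 l3 \<and>
   horizontal_line (A1, b1) (A2, b2) \<and> horizontal_line (A2, b2) (A3, b3)"

lemma key:
  assumes "Phi P1 P2 P3 l1 l2 l3 A1 b1 A2 b2 A3 b3"
  obtains c1 where "A1 = c1 *\<^sub>R P1"
    "c1^3 * ((l1 \<bullet> P1)^2 * (cross3 P1 P2 \<bullet> cross3 l2 l3)) = -(l1 \<bullet> P2) * (l1 \<bullet> cross3 l2 l3)"
proof -
  from assms obtain c1 c2 e1 e2 where A1: "A1 = c1 *\<^sub>R P1" and A2: "A2 = c2 *\<^sub>R P2"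
    and B1: "b1 = e1 *\<^sub>R l1" and B2: "b2 = e2 *\<^sub>R l2"
    and h11: "b1 \<bullet> A1 = 1" and h12: "b1 \<bullet> A2 = 1" and hb2: "b2 = b1 + cross3 A1 A2"
    unfolding Phi_def lies_over_def horiz_iff by blast
  have "b2 \<bullet> cross3 l2 l3 = 0" unfolding B2 by (simp add: dot_cross_self)
  then have q0: "e1 * (l1 \<bullet> cross3 l2 l3) + c1 * c2 * (cross3 P1 P2 \<bullet> cross3 l2 l3) = 0"
    unfolding hb2 A1 A2 B1 by (simp add: inner_add_left cross_mult_left cross_mult_right mult.commute)
  have q1: "e1 * c1 * (l1 \<bullet> P1) = 1" using h11 unfolding A1 B1 by (simp add: algebra_simps)
  have q2: "e1 * c2 * (l1 \<bullet> P2) = 1" using h12 unfolding A2 B1 by (simp add: algebra_simps)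
  have "c1^3 * ((l1 \<bullet> P1)^2 * (cross3 P1 P2 \<bullet> cross3 l2 l3)) = -(l1 \<bullet> P2) * (l1 \<bullet> cross3 l2 l3)"
    using q0 q1 q2 by algebra
  then show ?thesis using that A1 by blast
qed
lemma Phi_D:
  assumes "Phi P1 P2 P3 l1 l2 l3 A1 b1 A2 b2 A3 b3"
  shows "\<exists>c. A1 = c *\<^sub>R P1" "\<exists>c. A2 = c *\<^sub>R P2" "\<exists>c. A3 = c *\<^sub>R P3"
    "\<exists>c. b1 = c *\<^sub>R l1" "\<exists>c. b2 = c *\<^sub>R l2" "\<exists>c. b3 = c *\<^sub>R l3"
    "b1 \<bullet> A1 = 1" "b1 \<bullet> A2 = 1" "b2 = b1 + cross3 A1 A2" "b2 \<bullet> A3 = 1" "b3 = b2 + cross3 A2 A3"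
  using assms unfolding Phi_def lies_over_def horiz_iff inQ_def by blast+

lemma uniq:
  assumes nz: "l1 \<bullet> P2 \<noteq> 0" "l1 \<bullet> cross3 l2 l3 \<noteq> 0"
    and h: "Phi P1 P2 P3 l1 l2 l3 A1 b1 A2 b2 A3 b3" and h': "Phi P1 P2 P3 l1 l2 l3 A1' b1' A2' b2' A3' b3'"
  shows "(A1,b1,A2,b2,A3,b3) = (A1',b1',A2',b2',A3',b3')"
proof -
  obtain c where c: "A1 = c *\<^sub>R P1"
    "c^3 * ((l1 \<bullet> P1)^2 * (cross3 P1 P2 \<bullet> cross3 l2 l3)) = -(l1 \<bullet> P2) * (l1 \<bullet> cross3 l2 l3)"
    using key[OF h] by blast
  obtain c' where c': "A1' = c' *\<^sub>R P1"
    "c'^3 * ((l1 \<bullet> P1)^2 * (cross3 P1 P2 \<bullet> cross3 l2 l3)) = -(l1 \<bullet> P2) * (l1 \<bullet> cross3 l2 l3)"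
    using key[OF h'] by blast
  have "-(l1 \<bullet> P2) * (l1 \<bullet> cross3 l2 l3) \<noteq> 0" using nz by simp
  then have X: "(l1 \<bullet> P1)^2 * (cross3 P1 P2 \<bullet> cross3 l2 l3) \<noteq> 0" using c(2) by auto
  have "c^3 * ((l1 \<bullet> P1)^2 * (cross3 P1 P2 \<bullet> cross3 l2 l3)) = c'^3 * ((l1 \<bullet> P1)^2 * (cross3 P1 P2 \<bullet> cross3 l2 l3))"
    using c(2) c'(2) by simp
  then have "c^3 = c'^3" using X by (metis mult_cancel_right)
  then have "root 3 (c^3) = root 3 (c'^3)" by simp
  then have "c = c'" by (simp add: odd_real_root_power_cancel)
  then have eA1: "A1 = A1'" using c c' by simp
  note H = Phi_D[OF h] and H' = Phi_D[OF h']
  have "A1 \<bullet> b1 = 1" "A1 \<bullet> b1' = 1" using H(7) H'(7) eA1 by (simp_all add: inner_commute)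
  then have eb1: "b1 = b1'" using H(4) H'(4)
    by (metis same_scale)
  have eA2: "A2 = A2'" using H(2) H'(2) H(8) H'(8) eb1 by (metis same_scale)
  have eb2: "b2 = b2'" using H(9) H'(9) eA1 eA2 eb1 by simp
  have eA3: "A3 = A3'" using H(3) H'(3) H(10) H'(10) eb2 by (metis same_scale)
  have eb3: "b3 = b3'" using H(11) H'(11) eA2 eA3 eb2 by simp
  show ?thesis using eA1 eb1 eA2 eb2 eA3 eb3 by simp
qed
lemma nd_facts:
  assumes nd: "nondegenerate P1 P2 P3 l1 l2 l3" and ins: "inscribed P1 P2 P3 l1 l2 l3"
  shows "l1 \<bullet> P1 \<noteq> 0" "l2 \<bullet> P2 \<noteq> 0" "l3 \<bullet> P3 \<noteq> 0" "P1 \<bullet> cross3 P2 P3 \<noteq> 0"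
    "l1 \<bullet> cross3 l2 l3 \<noteq> 0" "l1 \<bullet> P2 \<noteq> 0" "l2 \<bullet> P1 \<noteq> 0" "l2 \<bullet> P3 \<noteq> 0" "l3 \<bullet> P2 \<noteq> 0"
    "cross3 P1 P2 \<bullet> cross3 l1 l2 = 0" "cross3 P2 P3 \<bullet> cross3 l2 l3 = 0"
proof -
  show a: "l1 \<bullet> P1 \<noteq> 0" "l2 \<bullet> P2 \<noteq> 0" "l3 \<bullet> P3 \<noteq> 0" "P1 \<bullet> cross3 P2 P3 \<noteq> 0"
    "l1 \<bullet> cross3 l2 l3 \<noteq> 0" using nd unfolding nondegenerate_def on_line_def det3_triple by auto
  show i: "cross3 P1 P2 \<bullet> cross3 l1 l2 = 0" "cross3 P2 P3 \<bullet> cross3 l2 l3 = 0"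
    using ins unfolding inscribed_def on_line_def meet_def join_def by auto
  have e1: "(l1 \<bullet> P1) * (l2 \<bullet> P2) = (l2 \<bullet> P1) * (l1 \<bullet> P2)"
    using i(1) unfolding cc_dot by (simp add: inner_commute)
  have e2: "(l2 \<bullet> P2) * (l3 \<bullet> P3) = (l3 \<bullet> P2) * (l2 \<bullet> P3)"
    using i(2) unfolding cc_dot by (simp add: inner_commute)
  show "l1 \<bullet> P2 \<noteq> 0" "l2 \<bullet> P1 \<noteq> 0" using e1 a by auto
  show "l2 \<bullet> P3 \<noteq> 0" "l3 \<bullet> P2 \<noteq> 0" using e2 a by auto
qed
lemma exist:
  assumes nd: "nondegenerate P1 P2 P3 l1 l2 l3" and ins: "inscribed P1 P2 P3 l1 l2 l3"
    and cr: "cr_equation P1 P2 P3 l1 l2 l3"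
  shows "\<exists>A1 b1 A2 b2 A3 b3. Phi P1 P2 P3 l1 l2 l3 A1 b1 A2 b2 A3 b3"
proof -
  note F = nd_facts[OF nd ins]
  define \<alpha> where "\<alpha> = l1 \<bullet> P1"
  define \<beta> where "\<beta> = l1 \<bullet> P2"
  define L where "L = l1 \<bullet> cross3 l2 l3"
  define N0 where "N0 = cross3 P1 P2"
  define Nw where "Nw = N0 \<bullet> cross3 l2 l3"
  have a0: "\<alpha> \<noteq> 0" "\<beta> \<noteq> 0" "L \<noteq> 0" using F unfolding \<alpha>_def \<beta>_def L_def by auto
  have N0nz: "N0 \<noteq> 0" using F(4) unfolding N0_def by (metis triple_cyc inner_zero_left)
  have Nwnz: "Nw \<noteq> 0"
  proof
    assume z: "Nw = 0"
    have t: "l1 \<bullet> cross3 l2 N0 = 0" using F(10) unfolding N0_def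
      by (metis triple_cyc2 inner_commute)
    have "L *\<^sub>R N0 = (l1 \<bullet> cross3 N0 l3) *\<^sub>R l2"
      using cramer[of l1 l2 l3 N0] z t unfolding L_def Nw_def by simp
    then have "L * (N0 \<bullet> P1) = (l1 \<bullet> cross3 N0 l3) * (l2 \<bullet> P1)"
      by (metis inner_scaleR_left)
    moreover have "N0 \<bullet> P1 = 0" unfolding N0_def by (simp add: dot_cross_self)
    ultimately have "l1 \<bullet> cross3 N0 l3 = 0" using F(7) by simp
    with \<open>L *\<^sub>R N0 = _\<close> have "L *\<^sub>R N0 = 0" by simp
    then show False using a0 N0nz by simp
  qed
  define K where "K = - (\<beta> * L) / (\<alpha>^2 * Nw)"
  define c1 where "c1 = root 3 K"
  have K3: "c1^3 = K" unfolding c1_def by (simp add: odd_real_root_pow)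
  have Knz: "K \<noteq> 0" unfolding K_def using a0 Nwnz by simp
  have c1nz: "c1 \<noteq> 0" using K3 Knz by auto
  have keyeq: "c1^3 * (\<alpha>^2 * Nw) = - (\<beta> * L)" using K3 a0 Nwnz unfolding K_def by simp
  define e1 where "e1 = 1 / (c1 * \<alpha>)"
  define c2 where "c2 = c1 * \<alpha> / \<beta>"
  define A1 where "A1 = c1 *\<^sub>R P1"
  define A2 where "A2 = c2 *\<^sub>R P2"
  define b1 where "b1 = e1 *\<^sub>R l1"
  define b2 where "b2 = b1 + cross3 A1 A2"
  have e1nz: "e1 \<noteq> 0" and c2nz: "c2 \<noteq> 0" unfolding e1_def c2_def using c1nz a0 by auto
  have h11: "b1 \<bullet> A1 = 1" unfolding b1_def A1_def e1_def using c1nz a0 by (simp add: \<alpha>_def)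
  have h12: "b1 \<bullet> A2 = 1" unfolding b1_def A2_def e1_def c2_def using c1nz a0 by (simp add: \<beta>_def)
  have N: "cross3 A1 A2 = (c1 * c2) *\<^sub>R N0" unfolding A1_def A2_def N0_def
    by (simp add: cross_mult_left cross_mult_right)
  have b2w: "b2 \<bullet> cross3 l2 l3 = 0"
  proof -
    have "b2 \<bullet> cross3 l2 l3 = e1 * L + c1 * c2 * Nw"
      unfolding b2_def N b1_def L_def Nw_def by (simp add: inner_add_left)
    also have "\<dots> = (\<beta> * L + c1^3 * (\<alpha>^2 * Nw)) / (c1 * \<alpha> * \<beta>)"
      unfolding e1_def c2_def using c1nz a0 by (simp add: field_simps power3_eq_cube power2_eq_square)
    also have "\<dots> = 0" using keyeq by simp
    finally show ?thesis .
  qed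
  have b2t: "l1 \<bullet> cross3 l2 b2 = 0"
  proof -
    have "l1 \<bullet> cross3 l2 b2 = b2 \<bullet> cross3 l1 l2" by (metis triple_cyc2)
    also have "\<dots> = 0" unfolding b2_def N b1_def using F(10) unfolding N0_def
      by (simp add: inner_add_left dot_cross_self)
    finally show ?thesis .
  qed
  define e2 where "e2 = (l1 \<bullet> cross3 b2 l3) / L"
  have B2: "b2 = e2 *\<^sub>R l2"
  proof -
    have "L *\<^sub>R b2 = (l1 \<bullet> cross3 b2 l3) *\<^sub>R l2"
      using cramer[of l1 l2 l3 b2] b2w b2t unfolding L_def by simp
    then have "b2 = (1/L) *\<^sub>R ((l1 \<bullet> cross3 b2 l3) *\<^sub>R l2)" using a0
      by (metis scaleR_scaleR divide_self_if mult.commute nonzero_divide_eq_eq scaleR_one times_divide_eq_right)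
    then show ?thesis unfolding e2_def by simp
  qed
  have h22: "b2 \<bullet> A2 = 1" unfolding b2_def using h12 by (simp add: inner_add_left dot_cross_self)
  have h21: "b2 \<bullet> A1 = 1" unfolding b2_def using h11 by (simp add: inner_add_left dot_cross_self)
  have e2nz: "e2 \<noteq> 0" using h22 B2 by auto
  define c3 where "c3 = 1 / (b2 \<bullet> P3)"
  have b2P3: "b2 \<bullet> P3 \<noteq> 0" using B2 e2nz F(8) by simp
  have c3nz: "c3 \<noteq> 0" unfolding c3_def using b2P3 by simp
  define A3 where "A3 = c3 *\<^sub>R P3"
  have h23: "b2 \<bullet> A3 = 1" unfolding A3_def c3_def using b2P3 by simp
  define M where "M = cross3 A2 A3"
  define b3 where "b3 = b2 + M"
  have l3A2: "l3 \<bullet> A2 \<noteq> 0" unfolding A2_def using c2nz F(9) by simp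
  define f3 where "f3 = 1 / (l3 \<bullet> A2)"
  have f3nz: "f3 \<noteq> 0" unfolding f3_def using l3A2 by simp
  define bs where "bs = f3 *\<^sub>R l3"
  have hs2: "bs \<bullet> A2 = 1" unfolding bs_def f3_def using l3A2 by simp
  have insc: "inscribed A1 A2 A3 b1 b2 bs"
    unfolding A1_def A2_def A3_def b1_def B2 bs_def
    using inscribed_scale[OF c1nz c2nz c3nz e1nz e2nz f3nz] ins by simp
  have hs3: "bs \<bullet> A3 = 1"
  proof -
    have "cross3 A2 A3 \<bullet> cross3 b2 bs = 0" using insc unfolding inscribed_def on_line_def meet_def join_def by simp
    then have "(A2 \<bullet> b2) * (A3 \<bullet> bs) - (A2 \<bullet> bs) * (A3 \<bullet> b2) = 0" unfolding cc_dot .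
    then show ?thesis using h22 h23 hs2 by (simp add: inner_commute)
  qed
  define d where "d = A1 \<bullet> cross3 A2 A3"
  have dnz: "d \<noteq> 0" unfolding d_def A1_def A2_def A3_def using c1nz c2nz c3nz F(4)
    by (simp add: cross_mult_left cross_mult_right)
  define v where "v = bs - b2"
  have v2: "v \<bullet> A2 = 0" and v3: "v \<bullet> A3 = 0" unfolding v_def using hs2 hs3 h22 h23 by (simp_all add: inner_diff_left)
  define k where "k = (v \<bullet> A1) / d"
  have hbs: "bs = b2 + k *\<^sub>R M"
  proof -
    have "d *\<^sub>R v = (v \<bullet> A1) *\<^sub>R M" using dual_cramer[of A1 A2 A3 v] v2 v3 unfolding d_def M_def by simp
    then have "v = k *\<^sub>R M" unfolding k_def using dnz
      by (metis scaleR_scaleR divide_self_if mult.commute nonzero_divide_eq_eq scaleR_one times_divide_eq_right)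
    then show ?thesis unfolding v_def by (simp add: algebra_simps)
  qed
  have knz: "k \<noteq> 0"
  proof
    assume "k = 0"
    then have "f3 *\<^sub>R l3 = e2 *\<^sub>R l2" using hbs B2 unfolding bs_def by simp
    then have "l3 = (e2 / f3) *\<^sub>R l2" using f3nz
      by (metis (no_types, lifting) divide_inverse_commute eq_vector_fraction_iff)
    then have "L = 0" unfolding L_def by (simp add: cross_mult_right)
    then show False using a0 by simp
  qed
  have Nnz: "cross3 A1 A2 \<noteq> 0" unfolding N using c1nz c2nz N0nz by simp
  have Mnz: "M \<noteq> 0" using dnz unfolding d_def M_def by auto
  note T = terms[OF h11 h12 b2_def h23 hs2 hs3 hbs[unfolded M_def]]
  have T1: "cross_ratio A2 (meet b1 b2) A1 (meet (join A1 A2) bs) = 1 - bs \<bullet> A1"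
    using T(1) Nnz by simp
  have T2: "cross_ratio (meet b2 bs) A2 (meet b1 (join A2 A3)) A3 = d"
    using T(2) Mnz knz unfolding d_def M_def by simp
  have crs: "cr_equation A1 A2 A3 b1 b2 bs"
    unfolding A1_def A2_def A3_def b1_def B2 bs_def
    using cr_eq_scale[OF c1nz c2nz c3nz e1nz e2nz f3nz] cr by simp
  then have s: "bs \<bullet> A1 = 1 + d" using T1 T2 unfolding cr_equation_def by simp
  have "v \<bullet> A1 = d" unfolding v_def using s h21 by (simp add: inner_diff_left)
  then have "k = 1" unfolding k_def using dnz by simp
  then have B3: "b3 = f3 *\<^sub>R l3" using hbs unfolding b3_def bs_def by simp
  have h33: "b3 \<bullet> A3 = 1" unfolding b3_def M_def using h23 by (simp add: inner_add_left dot_cross_self)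
  have ne1: "A1 \<noteq> A2" using Nnz by auto
  have ne2: "A2 \<noteq> A3" using Mnz unfolding M_def by auto
  have "Phi P1 P2 P3 l1 l2 l3 A1 b1 A2 b2 A3 b3"
    unfolding Phi_def lies_over_def horiz_iff inQ_def
    using h11 h12 h22 h23 h33 ne1 ne2 c1nz c2nz c3nz e1nz e2nz f3nz A1_def A2_def A3_def b1_def B2 B3
      b2_def b3_def M_def by blast
  then show ?thesis by blast
qed

theorem lemma2:
  shows "(\<forall>A1 b1 A2 b2 A3 b3 :: real^3.
            inQ A1 b1 \<and> inQ A2 b2 \<and> inQ A3 b3 \<and>
            horizontal_line (A1, b1) (A2, b2) \<and> horizontal_line (A2, b2) (A3, b3) \<and>
            \<not> collinear {(A1, b1), (A2, b2), (A3, b3)}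
            \<longrightarrow> inscribed A1 A2 A3 b1 b2 b3 \<and> cr_equation A1 A2 A3 b1 b2 b3)
       \<and> (\<forall>P1 P2 P3 l1 l2 l3 :: real^3.
            nondegenerate P1 P2 P3 l1 l2 l3 \<and> inscribed P1 P2 P3 l1 l2 l3 \<and>
            cr_equation P1 P2 P3 l1 l2 l3
            \<longrightarrow> (\<exists>!(A1, b1, A2, b2, A3, b3).
                   lies_over A1 b1 P1 l1 \<and> lies_over A2 b2 P2 l2 \<and> lies_over A3 b3 P3 l3 \<and>
                   horizontal_line (A1, b1) (A2, b2) \<and> horizontal_line (A2, b2) (A3, b3)))"
proof (intro conjI allI impI)
  fix A1 b1 A2 b2 A3 b3 :: "real^3"
  assume "inQ A1 b1 \<and> inQ A2 b2 \<and> inQ A3 b3 \<and>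
            horizontal_line (A1, b1) (A2, b2) \<and> horizontal_line (A2, b2) (A3, b3) \<and>
            \<not> collinear {(A1, b1), (A2, b2), (A3, b3)}"
  then show "inscribed A1 A2 A3 b1 b2 b3" "cr_equation A1 A2 A3 b1 b2 b3"
    using forward by blast+
next
  fix P1 P2 P3 l1 l2 l3 :: "real^3"
  assume h: "nondegenerate P1 P2 P3 l1 l2 l3 \<and> inscribed P1 P2 P3 l1 l2 l3 \<and>
            cr_equation P1 P2 P3 l1 l2 l3"
  note F = nd_facts[of P1 P2 P3 l1 l2 l3]
  have nz: "l1 \<bullet> P2 \<noteq> 0" "l1 \<bullet> cross3 l2 l3 \<noteq> 0" using F h by auto
  obtain A1 b1 A2 b2 A3 b3 where ph: "Phi P1 P2 P3 l1 l2 l3 A1 b1 A2 b2 A3 b3"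
    using exist h by blast
  show "\<exists>!(A1, b1, A2, b2, A3, b3).
                   lies_over A1 b1 P1 l1 \<and> lies_over A2 b2 P2 l2 \<and> lies_over A3 b3 P3 l3 \<and>
                   horizontal_line (A1, b1) (A2, b2) \<and> horizontal_line (A2, b2) (A3, b3)"
  proof (rule ex1I[where a="(A1, b1, A2, b2, A3, b3)"])
    show "case (A1, b1, A2, b2, A3, b3) of (A1, b1, A2, b2, A3, b3) \<Rightarrow>
      lies_over A1 b1 P1 l1 \<and> lies_over A2 b2 P2 l2 \<and> lies_over A3 b3 P3 l3 \<and>
                   horizontal_line (A1, b1) (A2, b2) \<and> horizontal_line (A2, b2) (A3, b3)"
      using ph unfolding Phi_def by simp
  next
    fix x
    assume "case x of (A1, b1, A2, b2, A3, b3) \<Rightarrow>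
      lies_over A1 b1 P1 l1 \<and> lies_over A2 b2 P2 l2 \<and> lies_over A3 b3 P3 l3 \<and>
                   horizontal_line (A1, b1) (A2, b2) \<and> horizontal_line (A2, b2) (A3, b3)"
    moreover obtain A1' b1' A2' b2' A3' b3' where x: "x = (A1', b1', A2', b2', A3', b3')"
      by (metis prod.exhaust)
    ultimately have "Phi P1 P2 P3 l1 l2 l3 A1' b1' A2' b2' A3' b3'" unfolding Phi_def by simp
    then show "x = (A1, b1, A2, b2, A3, b3)" using uniq[OF nz] ph x by metis
  qed
qed

end
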